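(* Let $P$ be any product rule and $\mathcal A=\langle X,F,\Delta\rangle$ a $P$-automaton. Then for every term $\alpha\in\mathrm{Terms}(X)$, $[\![\alpha]\!]_{\mathcal A}=[\![\alpha]\!]_\varrho$, where $\varrho:X\to\mathbb Q\langle\langle\Sigma\rangle\rangle$ is the valuation $\varrho(x)=[\![x]\!]_{\mathcal A}$.
   Context: Let $\Sigma$ be a finite alphabet, $\Sigma^*$ the set of finite words with empty word $\varepsilon$. A series is a function $f:\Sigma^*\to\mathbb Q$; $f_w=f(w)$; series form a $\mathbb Q$-vector space under pointwise operations with zero $\mathbb 0$. For $a\in\Sigma$, $\delta_af$ is $w\mapsto f(aw)$. Terms: $\mathrm{Terms}(X)$ generated by $u,v::=x\mid 0\mid c\cdot u\mid u+v\mid u*v$ ($x\in X$, $c\in\mathbb Q$). A product rule is a term $P$ over $\{x,\dot x,y,\dot y\}$; $P(s_1,s_2,s_3,s_4)$ is substitution for $x,\dot x,y,\dot y$. The $P$-product $*$ and semantics $[\![u]\!]_\varrho$ under valuations $\varrho:X\to$ series are the unique pair with $(f*g)_\varepsilon=f_\varepsilon g_\varepsilon$, $\delta_a(f*g)=[\![P]\!]_{[x\mapsto f,\dot x\mapsto\delta_af,y\mapsto g,\dot y\mapsto\delta_ag]}$, and $[\![\cdot]\!]_\varrho$ interpreting variables via $\varrho$ and constructors by zero, scalar multiplication, addition, $*$. $P$-automaton: a tuple $\mathcal A=\langle X,F,\Delta\rangle$ with variable set $X$, output $F:X\to\mathbb Q$, transitions $\Delta_a:X\to\mathrm{Terms}(X)$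 for $a\in\Sigma$. The $P$-extension of $D:X\to\mathrm{Terms}(X)$ is $\tilde D:\mathrm{Terms}(X)\to\mathrm{Terms}(X)$ with $\tilde D0=0$, $\tilde Dx=Dx$, $\tilde D(c\cdot\alpha)=c\cdot\tilde D\alpha$, $\tilde D(\alpha+\beta)=\tilde D\alpha+\tilde D\beta$, $\tilde D(\alpha*\beta)=P(\alpha,\tilde D\alpha,\beta,\tilde D\beta)$. $F$ is extended to terms by evaluation in $\mathbb Q$. The series recognised by $\alpha\in\mathrm{Terms}(X)$ is the unique $[\![\alpha]\!]_{\mathcal A}$ with $([\![\alpha]\!]_{\mathcal A})_\varepsilon=F(\alpha)$ and $\delta_a[\![\alpha]\!]_{\mathcal A}=[\![\tilde\Delta_a\alpha]\!]_{\mathcal A}$ for all $a\in\Sigma$. *)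

theory Defs
  imports Main "HOL.Rat"
begin

type_synonym 'a series = "'a list \<Rightarrow> rat"

definition deriv :: "'a \<Rightarrow> 'a series \<Rightarrow> 'a series" where
  "deriv a f = (\<lambda>w. f (a # w))"

datatype 'x trm = Var 'x | Zero | Scal rat "'x trm" | Plus "'x trm" "'x trm" | Times "'x trm" "'x trm"

text \<open>Variables of a product rule: x, x-dot, y, y-dot.\<close>
datatype pvar = PX | PXd | PY | PYd

type_synonym prule = "pvar trm"

primrec subst :: "('x \<Rightarrow> 'y trm) \<Rightarrow> 'x trm \<Rightarrow> 'y trm" where
  "subst s (Var x) = s x"
| "subst s Zero = Zero"
| "subst s (Scal c u) = Scal c (subst s u)"
| "subst s (Plus u v) = Plus (subst s u) (subst s v)"
| "subst s (Times u v) = Times (subst s u) (subst s v)"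

definition papp :: "prule \<Rightarrow> 'x trm \<Rightarrow> 'x trm \<Rightarrow> 'x trm \<Rightarrow> 'x trm \<Rightarrow> 'x trm" where
  "papp P s1 s2 s3 s4 = subst (\<lambda>v. case v of PX \<Rightarrow> s1 | PXd \<Rightarrow> s2 | PY \<Rightarrow> s3 | PYd \<Rightarrow> s4) P"

primrec sem :: "('a series \<Rightarrow> 'a series \<Rightarrow> 'a series) \<Rightarrow> ('x \<Rightarrow> 'a series) \<Rightarrow> 'x trm \<Rightarrow> 'a series" where
  "sem m \<rho> (Var x) = \<rho> x"
| "sem m \<rho> Zero = (\<lambda>w. 0)"
| "sem m \<rho> (Scal c u) = (\<lambda>w. c * sem m \<rho> u w)"
| "sem m \<rho> (Plus u v) = (\<lambda>w. sem m \<rho> u w + sem m \<rho> v w)"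
| "sem m \<rho> (Times u v) = m (sem m \<rho> u) (sem m \<rho> v)"

definition is_P_product :: "prule \<Rightarrow> ('a series \<Rightarrow> 'a series \<Rightarrow> 'a series) \<Rightarrow> bool" where
  "is_P_product P m \<longleftrightarrow>
     (\<forall>f g. m f g [] = f [] * g [] \<and>
       (\<forall>a. deriv a (m f g) =
          sem m (\<lambda>v. case v of PX \<Rightarrow> f | PXd \<Rightarrow> deriv a f | PY \<Rightarrow> g | PYd \<Rightarrow> deriv a g) P))"

primrec pext :: "prule \<Rightarrow> ('x \<Rightarrow> 'x trm) \<Rightarrow> 'x trm \<Rightarrow> 'x trm" where
  "pext P D (Var x) = D x"
| "pext P D Zero = Zero"
| "pext P D (Scal c u) = Scal c (pext P D u)"
| "pext P D (Plus u v) = Plus (pext P D u) (pext P D v)"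
| "pext P D (Times u v) = papp P u (pext P D u) v (pext P D v)"

primrec outext :: "('x \<Rightarrow> rat) \<Rightarrow> 'x trm \<Rightarrow> rat" where
  "outext F (Var x) = F x"
| "outext F Zero = 0"
| "outext F (Scal c u) = c * outext F u"
| "outext F (Plus u v) = outext F u + outext F v"
| "outext F (Times u v) = outext F u * outext F v"

text \<open>S is the (unique) function assigning to each term the series it recognises in the
  P-automaton <X, F, Delta>.\<close>
definition recognises :: "prule \<Rightarrow> ('x \<Rightarrow> rat) \<Rightarrow> ('a \<Rightarrow> 'x \<Rightarrow> 'x trm) \<Rightarrow> ('x trm \<Rightarrow> 'a series) \<Rightarrow> bool" where
  "recognises P F \<Delta> S \<longleftrightarrow>
     (\<forall>\<alpha>. S \<alpha> [] = outext F \<alpha> \<and> (\<forall>a. deriv a (S \<alpha>) = S (pext P (\<Delta> a) \<alpha>)))"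

end

theory Submission
  imports Defs
begin

definition eqn :: "nat \<Rightarrow> 'a series \<Rightarrow> 'a series \<Rightarrow> bool" where
  "eqn n f g \<longleftrightarrow> (\<forall>w. length w \<le> n \<longrightarrow> f w = g w)"

lemma sem_subst: "sem m \<rho> (subst s t) = sem m (\<lambda>x. sem m \<rho> (s x)) t"
  by (induction t) auto

lemma loc_sem:
  assumes M: "\<forall>f f' g g'. eqn k f f' \<and> eqn k g g' \<longrightarrow> eqn k (m f g) (m f' g')"
    and V: "\<forall>x. eqn k (\<sigma> x) (\<sigma>' x)"
  shows "eqn k (sem m \<sigma> t) (sem m \<sigma>' t)"
  using V
proof (induction t)
  case (Times t1 t2)
  then show ?case using M by simp
qed (auto simp: eqn_def)

lemma loc_m:
  assumes P: "is_P_product P m"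
  shows "\<forall>f f' g g'. eqn n f f' \<and> eqn n g g' \<longrightarrow> eqn n (m f g) (m f' g')"
proof (induction n)
  case 0
  show ?case using P unfolding is_P_product_def eqn_def by auto
next
  case (Suc k)
  show ?case
  proof (intro allI impI)
    fix f f' g g' :: "'a series"
    assume A: "eqn (Suc k) f f' \<and> eqn (Suc k) g g'"
    show "eqn (Suc k) (m f g) (m f' g')"
      unfolding eqn_def
    proof (intro allI impI)
      fix w :: "'a list" assume L: "length w \<le> Suc k"
      show "m f g w = m f' g' w"
      proof (cases w)
        case Nil
        then show ?thesis using P A unfolding is_P_product_def eqn_def by auto
      next
        case (Cons a u)
        let ?s = "\<lambda>v. case v of PX \<Rightarrow> f | PXd \<Rightarrow> deriv a f | PY \<Rightarrow> g | PYd \<Rightarrow> deriv a g"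
        let ?s' = "\<lambda>v. case v of PX \<Rightarrow> f' | PXd \<Rightarrow> deriv a f' | PY \<Rightarrow> g' | PYd \<Rightarrow> deriv a g'"
        have V: "\<forall>x. eqn k (?s x) (?s' x)"
        proof
          fix x show "eqn k (?s x) (?s' x)"
            using A by (cases x) (auto simp: eqn_def deriv_def)
        qed
        have "eqn k (sem m ?s P) (sem m ?s' P)"
          by (rule loc_sem[OF Suc V])
        moreover have "m f g w = sem m ?s P u" "m f' g' w = sem m ?s' P u"
          using P Cons unfolding is_P_product_def
          by (metis deriv_def)+
        ultimately show ?thesis using L Cons by (auto simp: eqn_def)
      qed
    qed
  qed
qed

lemma out_T:
  assumes P: "is_P_product P m" and R: "recognises P F \<Delta> S"
  shows "sem m (\<lambda>x. S (Var x)) t [] = outext F t"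
  using P R by (induction t) (auto simp: is_P_product_def recognises_def)

theorem mainTheorem6:
  fixes P :: prule
    and m :: "('a::finite) series \<Rightarrow> 'a series \<Rightarrow> 'a series"
    and F :: "'x \<Rightarrow> rat"
    and \<Delta> :: "'a \<Rightarrow> 'x \<Rightarrow> 'x trm"
    and S :: "'x trm \<Rightarrow> 'a series"
  assumes "is_P_product P m"
    and "recognises P F \<Delta> S"
  shows "\<forall>\<alpha>. S \<alpha> = sem m (\<lambda>x. S (Var x)) \<alpha>"
proof -
  note P = assms(1) and R = assms(2)
  define T where "T = sem m (\<lambda>x. S (Var x))"
  have main: "\<forall>\<alpha>. eqn n (S \<alpha>) (T \<alpha>)" for n
  proof (induction n)
    case 0
    show ?case using out_T[OF P R] R by (auto simp: eqn_def T_def recognises_def)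
  next
    case (Suc n)
    have D: "eqn n (deriv a (T \<alpha>)) (T (pext P (\<Delta> a) \<alpha>))" for a \<alpha>
    proof (induction \<alpha>)
      case (Var x)
      have "deriv a (T (Var x)) = S (\<Delta> a x)"
        using R by (simp add: T_def recognises_def)
      then show ?case using Suc by (simp add: T_def)
    next
      case Zero
      then show ?case by (simp add: eqn_def deriv_def T_def)
    next
      case (Scal c u)
      then show ?case by (simp add: eqn_def deriv_def T_def)
    next
      case (Plus u v)
      then show ?case by (simp add: eqn_def deriv_def T_def)
    next
      case (Times u v)
      let ?s = "\<lambda>w. case w of PX \<Rightarrow> T u | PXd \<Rightarrow> deriv a (T u) | PY \<Rightarrow> T v | PYd \<Rightarrow> deriv a (T v)"
      let ?s' = "\<lambda>w. T (case w of PX \<Rightarrow> u | PXd \<Rightarrow> pext P (\<Delta> a) u | PY \<Rightarrow> v | PYd \<Rightarrow> pext P (\<Delta> a) v)"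
      have V: "\<forall>x. eqn n (?s x) (?s' x)"
      proof
        fix x show "eqn n (?s x) (?s' x)"
          using Times by (cases x) (auto simp: eqn_def)
      qed
      have E: "eqn n (sem m ?s P) (sem m ?s' P)"
        by (rule loc_sem[OF loc_m[OF P] V])
      have "deriv a (T (Times u v)) = sem m ?s P"
        using P unfolding is_P_product_def T_def by simp
      moreover have "T (pext P (\<Delta> a) (Times u v)) = sem m ?s' P"
        by (simp add: T_def papp_def sem_subst)
      ultimately show ?case using E by simp
    qed
    show ?case
    proof
      fix \<alpha>
      show "eqn (Suc n) (S \<alpha>) (T \<alpha>)"
        unfolding eqn_def
      proof (intro allI impI)
        fix w :: "'a list" assume L: "length w \<le> Suc n"
        show "S \<alpha> w = T \<alpha> w"
        proof (cases w)
          case Nil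
          then show ?thesis using out_T[OF P R] R by (auto simp: T_def recognises_def)
        next
          case (Cons a u)
          have "S \<alpha> w = S (pext P (\<Delta> a) \<alpha>) u"
            using R Cons unfolding recognises_def by (metis deriv_def)
          also have "\<dots> = T (pext P (\<Delta> a) \<alpha>) u"
            using Suc L Cons by (auto simp: eqn_def)
          also have "\<dots> = T \<alpha> w"
            using D[of a \<alpha>] L Cons by (auto simp: eqn_def deriv_def)
          finally show ?thesis .
        qed
      qed
    qed
  qed
  show ?thesis
  proof
    fix \<alpha>
    show "S \<alpha> = sem m (\<lambda>x. S (Var x)) \<alpha>"
    proof
      fix w :: "'a list"
      show "S \<alpha> w = sem m (\<lambda>x. S (Var x)) \<alpha> w"
        using main[of "length w"] by (simp add: eqn_def T_def)
    qed
  qed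
qed

end
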